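(* Let $\mathcal{X}=\{\mathbf{x}_1,\dots,\mathbf{x}_N\}\subset\mathbb{R}^d$, and for weights $\pi=(\pi_1,\dots,\pi_N)$ with $\pi_j>0$, $\sum_j\pi_j=1$, and bandwidths $\sigma\in(0,\infty)^N$ consider the $\pi$-KDE model $p_{\pi\text{-KDE}}(\mathbf{x};\pi,\sigma)=\sum_j\pi_j\mathcal{N}(\mathbf{x};\mathbf{x}_j,\sigma_j^2\mathbf{I})$, with total log-likelihood $L(\pi,\sigma)=\sum_i\log p_{\pi\text{-KDE}}(\mathbf{x}_i;\pi,\sigma)$ and leave-one-out total log-likelihood $L_{\text{LOO}}(\pi,\sigma)=\sum_i\log\sum_{j\ne i}\pi_j\mathcal{N}(\mathbf{x}_i;\mathbf{x}_j,\sigma_j^2\mathbf{I})$. Then: (i) For any index $j'$ and any fixed $\pi$ and fixed $\sigma_j>0$ ($j\ne j'$), $L(\pi,\sigma)\to+\infty$ as $\sigma_{j'}\to0^+$; conversely, if $\sigma_j\ge\varepsilon>0$ for all $j$ then $L(\pi,\sigma)$ is bounded above by a constant depending only on $N,d,\varepsilon$ (uniformly in $\pi$), so $L(\pi^{(n)},\sigma^{(n)})\to+\infty$ forces $\min_j\sigma^{(n)}_j\to0$. (ii) If $N\ge2$ and the points of $\mathcal{X}$ are pairwise distinct, then $L_{\text{LOO}}$ is bounded above on the set of all admissible $(\pi,\sigma)$. (iii) If $N\ge2$ and the points of $\mathcal{X}$ are pairwise distinct, there exists $\varepsilon>0$ depending only on the dataset such that every maximizer $(\pi^*,\sigma^*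 )$ of $L_{\text{LOO}}$ over admissible $(\pi,\sigma)$ satisfies $\sigma^*_j\ge\varepsilon$ for all $j$ (no data-copying).
   Context: $\mathcal{N}(\mathbf{x};\boldsymbol\mu,\sigma^2\mathbf{I})=(2\pi\sigma^2)^{-d/2}\exp\!\big(-\lVert\mathbf{x}-\boldsymbol\mu\rVert^2/(2\sigma^2)\big)$ denotes the isotropic Gaussian density on $\mathbb{R}^d$. The $\pi$-KDE model is a Gaussian mixture with fixed centres at the data points, individual positive weights $\pi_j$ summing to one, and individual bandwidths $\sigma_j$; the adaptive KDE is the special case $\pi_j=1/N$. "Data-copying" means that some bandwidth $\sigma_j\to0^+$. *)

theory Defs
  imports "HOL-Analysis.Analysis"
begin

definition gauss :: "'a::euclidean_space \<Rightarrow> 'a \<Rightarrow> real \<Rightarrow> real" where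
  "gauss x mu s = (2 * pi * s\<^sup>2) powr (- real DIM('a) / 2) * exp (- (norm (x - mu))\<^sup>2 / (2 * s\<^sup>2))"

definition admissible :: "nat \<Rightarrow> (nat \<Rightarrow> real) \<Rightarrow> (nat \<Rightarrow> real) \<Rightarrow> bool" where
  "admissible N w s \<longleftrightarrow> (\<forall>j<N. w j > 0) \<and> (\<Sum>j<N. w j) = 1 \<and> (\<forall>j<N. s j > 0)"

definition pkde :: "nat \<Rightarrow> (nat \<Rightarrow> 'a::euclidean_space) \<Rightarrow> (nat \<Rightarrow> real) \<Rightarrow> (nat \<Rightarrow> real) \<Rightarrow> 'a \<Rightarrow> real" where
  "pkde N X w s x = (\<Sum>j<N. w j * gauss x (X j) (s j))"

definition loglik :: "nat \<Rightarrow> (nat \<Rightarrow> 'a::euclidean_space) \<Rightarrow> (nat \<Rightarrow> real) \<Rightarrow> (nat \<Rightarrow> real) \<Rightarrow> real" where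
  "loglik N X w s = (\<Sum>i<N. ln (pkde N X w s (X i)))"

definition loglik_loo :: "nat \<Rightarrow> (nat \<Rightarrow> 'a::euclidean_space) \<Rightarrow> (nat \<Rightarrow> real) \<Rightarrow> (nat \<Rightarrow> real) \<Rightarrow> real" where
  "loglik_loo N X w s = (\<Sum>i<N. ln (\<Sum>j\<in>{..<N} - {i}. w j * gauss (X i) (X j) (s j)))"

end

theory Submission
  imports Defs
begin


lemma gauss_dist_bound: fixes x mu :: "'a::euclidean_space" assumes "x \<noteq> mu" "s \<noteq> 0"
  shows "gauss x mu s \<le> (real DIM('a) / (2*pi*(norm (x - mu))\<^sup>2)) powr (real DIM('a) / 2)"
proof -
  define k where "k = real DIM('a) / 2"
  define r2 where "r2 = (norm (x - mu))\<^sup>2"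
  define a where "a = r2 / (2* s\<^sup>2)"
  define P where "P = 2*pi* s\<^sup>2"
  have k: "k > 0" unfolding k_def by simp
  have r2: "r2 > 0" unfolding r2_def using assms by simp
  have a: "a > 0" unfolding a_def using r2 assms by simp
  have P: "P > 0" unfolding P_def using assms by simp
  have e1: "exp a = exp (a/k) powr k" using k by (simp add: powr_def)
  have "(a/k) powr k \<le> exp (a/k) powr k"
    using k a by (intro powr_mono2) (auto intro: order_trans[OF _ exp_ge_add_one_self])
  with e1 have ea: "(a/k) powr k \<le> exp a" by simp
  have apos: "(a/k) powr k > 0" using a k by simp
  have "exp (-a) = 1 / exp a" by (simp add: exp_minus divide_inverse)
  also have "\<dots> \<le> 1 / ((a/k) powr k)" using ea apos by (intro divide_left_mono) auto
  also have "\<dots> = (k/a) powr k" using a k by (simp add: powr_divide)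
  finally have ex: "exp (-a) \<le> (k/a) powr k" .
  have g: "gauss x mu s = P powr (-k) * exp (-a)"
    unfolding gauss_def k_def a_def P_def r2_def by simp
  have "P powr (-k) * exp (-a) \<le> P powr (-k) * (k/a) powr k"
    using ex by (intro mult_left_mono) auto
  also have "\<dots> = ((k/a)/P) powr k" using P a k by (simp add: powr_minus_divide powr_divide powr_mult mult.commute)
  also have "(k/a)/P = real DIM('a) / (2*pi*(norm (x - mu))\<^sup>2)"
    unfolding k_def a_def P_def r2_def using assms by (simp add: field_simps)
  finally show ?thesis using g k_def by simp
qed


lemma ln_strict: fixes x :: real assumes "1 < x" shows "ln x < x - 1"
proof -
  have sx: "0 < sqrt x" "sqrt x \<noteq> 1" using assms by auto
  have "ln x = 2 * ln (sqrt x)" using assms by (simp add: ln_sqrt)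
  also have "\<dots> \<le> 2 * (sqrt x - 1)" using ln_le_minus_one[OF sx(1)] by simp
  also have "\<dots> < x - 1"
  proof -
    have "0 < (sqrt x - 1)^2" using sx by simp
    then show ?thesis using assms by (simp add: power2_eq_square algebra_simps)
  qed
  finally show ?thesis .
qed

lemma gauss_exp: fixes x mu :: "'a::euclidean_space" assumes "s \<noteq> 0"
  shows "gauss x mu s = exp ((- real DIM('a) / 2) * ln (2*pi* s\<^sup>2) + (- (norm (x - mu))\<^sup>2 / (2* s\<^sup>2)))"
proof -
  have "2*pi* s\<^sup>2 \<noteq> 0" using assms by simp
  then have "(2*pi* s\<^sup>2) powr (- real DIM('a) / 2) = exp ((- real DIM('a) / 2) * ln (2*pi* s\<^sup>2))"
    unfolding powr_def by (simp only: if_False)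
  then show ?thesis unfolding gauss_def exp_add by simp
qed

lemma gauss_strict: fixes x mu :: "'a::euclidean_space"
  assumes "0 < s" "s < e" "real DIM('a) * e\<^sup>2 \<le> (norm (x - mu))\<^sup>2"
  shows "gauss x mu s < gauss x mu e"
proof -
  define D where "D = real DIM('a)"
  define r2 where "r2 = (norm (x - mu))\<^sup>2"
  have D: "D > 0" unfolding D_def by simp
  have e: "e > 0" using assms by simp
  have s2: "s\<^sup>2 < e\<^sup>2" using assms by (intro power_strict_mono) auto
  have s2p: "s\<^sup>2 > 0" using assms by simp
  define q where "q = e\<^sup>2 / s\<^sup>2"
  have q: "q > 1" unfolding q_def using s2 s2p by simp
  have lnd: "ln (2*pi* e\<^sup>2) - ln (2*pi* s\<^sup>2) = ln q"
    unfolding q_def using e assms(1) by (simp add: ln_div ln_mult)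
  have "D/2 * ln q < D/2 * (q - 1)" using ln_strict[OF q] D by simp
  also have "D/2 * (q - 1) = (D * e\<^sup>2) * ((e\<^sup>2 - s\<^sup>2) / (2 * s\<^sup>2 * e\<^sup>2))"
    unfolding q_def using s2p e by (simp add: field_simps)
  also have "\<dots> \<le> r2 * ((e\<^sup>2 - s\<^sup>2) / (2 * s\<^sup>2 * e\<^sup>2))"
    using assms(3) s2 s2p e unfolding D_def r2_def by (intro mult_right_mono) auto
  also have "\<dots> = r2 / (2* s\<^sup>2) - r2 / (2* e\<^sup>2)"
    using s2p e by (simp add: field_simps)
  finally have "D/2 * ln q < r2 / (2* s\<^sup>2) - r2 / (2* e\<^sup>2)" .
  then have "(- D / 2) * ln (2*pi* s\<^sup>2) + (- r2 / (2* s\<^sup>2)) < (- D / 2) * ln (2*pi* e\<^sup>2) + (- r2 / (2* e\<^sup>2))"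
    using lnd by (simp add: algebra_simps)
  then show ?thesis using assms(1) e unfolding D_def r2_def by (simp add: gauss_exp)
qed



lemma gauss_nonneg: "gauss x mu s \<ge> 0"
  by (simp add: gauss_def)

lemma gauss_pos: "s \<noteq> 0 \<Longrightarrow> gauss x mu s > 0"
  by (subst gauss_exp) simp_all

lemma gauss_self: fixes x :: "'a::euclidean_space"
  shows "gauss x x s = (2*pi* s\<^sup>2) powr (- real DIM('a) / 2)"
  by (simp add: gauss_def)

lemma pkde_ge: assumes "i < N" "\<forall>j<N. w j \<ge> 0"
  shows "w i * gauss (X i) (X i) (s i) \<le> pkde N X w s (X i)"
  unfolding pkde_def using assms
  by (intro member_le_sum[where f="\<lambda>j. w j * gauss (X i) (X j) (s j)"]) (auto intro: mult_nonneg_nonneg gauss_nonneg)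

lemma partA:
  fixes X :: "nat \<Rightarrow> 'a::euclidean_space"
  assumes j': "j' < N" and w: "\<forall>j<N. w j > 0" and s: "\<forall>j<N. j \<noteq> j' \<longrightarrow> s j > 0"
  shows "filterlim (\<lambda>t. loglik N X w (s(j' := t))) at_top (at_right 0)"
proof -
  define D where "D = real DIM('a)"
  have D: "D > 0" unfolding D_def by simp
  define c where "c = (\<Sum>i\<in>{..<N}-{j'}. ln (w i * gauss (X i) (X i) (s i)))"
  define C where "C = c + ln (w j') + (- D / 2) * ln (2*pi)"
  have low: "C + D * (- ln t) \<le> loglik N X w (s(j' := t))" if t: "0 < t" for t
  proof -
    let ?s = "s(j' := t)"
    have pos: "\<And>i. i < N \<Longrightarrow> 0 < w i * gauss (X i) (X i) (?s i)"
      using w s t by (intro mult_pos_pos gauss_pos) auto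
    have each: "ln (w i * gauss (X i) (X i) (?s i)) \<le> ln (pkde N X w ?s (X i))" if "i < N" for i
    proof -
      have "w i * gauss (X i) (X i) (?s i) \<le> pkde N X w ?s (X i)"
        using that w by (intro pkde_ge) (auto simp: less_imp_le)
      then show ?thesis using pos[OF that] by simp
    qed
    have "(\<Sum>i<N. ln (w i * gauss (X i) (X i) (?s i))) \<le> loglik N X w ?s"
      unfolding loglik_def using each by (intro sum_mono) auto
    moreover have "(\<Sum>i<N. ln (w i * gauss (X i) (X i) (?s i)))
        = ln (w j' * gauss (X j') (X j') t) + c"
      unfolding c_def using j' by (subst sum.remove[of _ j']) (auto intro!: sum.cong)
    moreover have "ln (w j' * gauss (X j') (X j') t) = ln (w j') + (- D / 2) * ln (2*pi) + D * (- ln t)"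
    proof -
      have "ln (w j' * gauss (X j') (X j') t) = ln (w j') + ln ((2*pi* t\<^sup>2) powr (- D / 2))"
        using w j' t unfolding gauss_self D_def by (subst ln_mult) auto
      also have "ln ((2*pi* t\<^sup>2) powr (- D / 2)) = (- D / 2) * (ln (2*pi) + 2 * ln t)"
        using t by (simp add: ln_mult ln_realpow)
      finally show ?thesis by (simp add: algebra_simps)
    qed
    ultimately show ?thesis unfolding C_def by simp
  qed
  have "filterlim (\<lambda>t. C + D * (- ln t)) at_top (at_right (0::real))"
  proof (rule filterlim_tendsto_add_at_top)
    show "((\<lambda>t. C) \<longlongrightarrow> C) (at_right 0)" by simp
    show "filterlim (\<lambda>t. D * (- ln t)) at_top (at_right (0::real))"
    proof (rule filterlim_tendsto_pos_mult_at_top)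
      show "((\<lambda>t. D) \<longlongrightarrow> D) (at_right 0)" by simp
      show "0 < D" by (rule D)
      show "filterlim (\<lambda>t. - ln t) at_top (at_right (0::real))"
        using ln_at_0 filterlim_uminus_at_bot by blast
    qed
  qed
  then show ?thesis
    by (rule filterlim_at_top_mono) (rule eventually_mono[OF eventually_at_right_less[of 0]], use low in auto)
qed



lemma gauss_le: fixes x mu :: "'a::euclidean_space" assumes "0 < e" "e \<le> s"
  shows "gauss x mu s \<le> (2*pi* e\<^sup>2) powr (- real DIM('a) / 2)"
proof -
  have "(2*pi* s\<^sup>2) powr (- real DIM('a) / 2) \<le> (2*pi* e\<^sup>2) powr (- real DIM('a) / 2)"
    using assms by (intro powr_mono2') (auto intro: power_mono)
  moreover have "exp (- (norm (x - mu))\<^sup>2 / (2* s\<^sup>2)) \<le> 1" by simp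
  moreover have "(2*pi* s\<^sup>2) powr (- real DIM('a) / 2) \<ge> 0" by simp
  ultimately have "(2*pi* s\<^sup>2) powr (- real DIM('a) / 2) * exp (- (norm (x - mu))\<^sup>2 / (2* s\<^sup>2)) \<le> (2*pi* e\<^sup>2) powr (- real DIM('a) / 2) * 1"
    by (intro mult_mono) auto
  then show ?thesis unfolding gauss_def by simp
qed


lemma partB:
  fixes Y :: "nat \<Rightarrow> 'a::euclidean_space"
  assumes e: "0 < e" and adm: "admissible N w s" and se: "\<forall>j<N. e \<le> s j"
  shows "loglik N Y w s \<le> real N * ln ((2*pi* e\<^sup>2) powr (- real DIM('a) / 2))"
proof -
  define G where "G = (2*pi* e\<^sup>2) powr (- real DIM('a) / 2)"
  have w: "\<forall>j<N. w j > 0" "(\<Sum>j<N. w j) = 1" and s: "\<forall>j<N. s j > 0"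
    using adm unfolding admissible_def by auto
  have "ln (pkde N Y w s (Y i)) \<le> ln G" if i: "i \<in> {..<N}" for i
  proof -
    have pos: "0 < pkde N Y w s (Y i)" unfolding pkde_def
      using i w s by (intro sum_pos) (auto intro!: mult_pos_pos gauss_pos)
    have "pkde N Y w s (Y i) \<le> (\<Sum>j<N. w j * G)" unfolding pkde_def
    proof (intro sum_mono mult_left_mono)
      fix j assume "j \<in> {..<N}"
      then show "gauss (Y i) (Y j) (s j) \<le> G" unfolding G_def using gauss_le e se by blast
      show "0 \<le> w j" using w \<open>j \<in> {..<N}\<close> by (simp add: less_imp_le)
    qed
    also have "\<dots> = G" using w by (simp add: sum_distrib_right[symmetric])
    finally show ?thesis using pos by simp
  qed
  then have "loglik N Y w s \<le> real (card {..<N}) * ln G"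
    unfolding loglik_def by (intro sum_bounded_above) auto
  then show ?thesis by (simp add: G_def)
qed

lemma partC:
  fixes X :: "nat \<Rightarrow> 'a::euclidean_space" and w s :: "nat \<Rightarrow> nat \<Rightarrow> real"
  assumes adm: "\<forall>n. admissible N (w n) (s n)"
    and lim: "filterlim (\<lambda>n. loglik N X (w n) (s n)) at_top sequentially"
  shows "(\<lambda>n. Min (s n ` {..<N})) \<longlonglongrightarrow> 0"
proof (cases "N = 0")
  case True
  then have "filterlim (\<lambda>n. 0::real) at_top sequentially" using lim by (simp add: loglik_def)
  then have "eventually (\<lambda>n. (1::real) \<le> 0) sequentially" unfolding filterlim_at_top by blast
  then show ?thesis by simp
next
  case False
  show ?thesis
  proof (rule tendstoI)
    fix e :: real assume e: "0 < e"
    define C where "C = real N * ln ((2*pi* e\<^sup>2) powr (- real DIM('a) / 2))"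
    have ev: "eventually (\<lambda>n. C + 1 \<le> loglik N X (w n) (s n)) sequentially"
      using lim unfolding filterlim_at_top by blast
    show "eventually (\<lambda>n. dist (Min (s n ` {..<N})) 0 < e) sequentially"
    proof (rule eventually_mono[OF ev])
      fix n assume n: "C + 1 \<le> loglik N X (w n) (s n)"
      have spos: "\<forall>j<N. s n j > 0" using adm unfolding admissible_def by auto
      have fin: "finite (s n ` {..<N})" "s n ` {..<N} \<noteq> {}" using False by auto
      have mpos: "0 < Min (s n ` {..<N})" using fin spos by (subst Min_gr_iff) auto
      have "Min (s n ` {..<N}) < e"
      proof (rule ccontr)
        assume "\<not> ?thesis"
        then have eM: "e \<le> Min (s n ` {..<N})" by simp
        have "\<forall>j<N. e \<le> s n j"
        proof (intro allI impI)
          fix j assume "j < N"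
          then have "Min (s n ` {..<N}) \<le> s n j" using fin by (intro Min_le) auto
          then show "e \<le> s n j" using eM by simp
        qed
        then have "loglik N X (w n) (s n) \<le> C"
          unfolding C_def using partB[OF e adm[rule_format, of n]] by blast
        with n show False by simp
      qed
      then show "dist (Min (s n ` {..<N})) 0 < e" using mpos by simp
    qed
  qed
qed



lemma min_dist:
  fixes X :: "nat \<Rightarrow> 'a::euclidean_space"
  assumes N: "N \<ge> 2" and inj: "inj_on X {..<N}"
  shows "\<exists>m>0. \<forall>i<N. \<forall>j<N. i \<noteq> j \<longrightarrow> m \<le> norm (X i - X j)"
proof -
  define M where "M = (\<lambda>(i,j). norm (X i - X j)) ` {p \<in> {..<N} \<times> {..<N}. fst p \<noteq> snd p}"
  have fin: "finite M" unfolding M_def by auto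
  have ne: "M \<noteq> {}" proof -
    have "norm (X 0 - X 1) \<in> M" unfolding M_def using N by force
    then show ?thesis by auto
  qed
  have pos: "\<forall>x\<in>M. 0 < x" unfolding M_def using inj by (auto simp: inj_on_def)
  show ?thesis
  proof (intro exI conjI allI impI)
    show "0 < Min M" using fin ne pos by simp
    fix i j assume "i < N" "j < N" "i \<noteq> j"
    then have "norm (X i - X j) \<in> M" unfolding M_def by force
    then show "Min M \<le> norm (X i - X j)" using fin by simp
  qed
qed

lemma partD:
  fixes X :: "nat \<Rightarrow> 'a::euclidean_space"
  assumes N: "N \<ge> 2" and m: "m > 0" and md: "\<forall>i<N. \<forall>j<N. i \<noteq> j \<longrightarrow> m \<le> norm (X i - X j)"
    and adm: "admissible N w s"
  shows "loglik_loo N X w s \<le> real N * ln ((real DIM('a) / (2*pi* m\<^sup>2)) powr (real DIM('a) / 2))"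
proof -
  define B where "B = (real DIM('a) / (2*pi* m\<^sup>2)) powr (real DIM('a) / 2)"
  have w: "\<forall>j<N. w j > 0" "(\<Sum>j<N. w j) = 1" and s: "\<forall>j<N. s j > 0"
    using adm unfolding admissible_def by auto
  have "ln (\<Sum>j\<in>{..<N} - {i}. w j * gauss (X i) (X j) (s j)) \<le> ln B" if i: "i \<in> {..<N}" for i
  proof -
    define j0 where "j0 = (if i = 0 then 1 else (0::nat))"
    have j0: "j0 < N" "j0 \<noteq> i" unfolding j0_def using N by auto
    have pos: "0 < (\<Sum>j\<in>{..<N} - {i}. w j * gauss (X i) (X j) (s j))"
      using i w s j0 by (intro sum_pos) (auto intro!: mult_pos_pos gauss_pos)
    have "(\<Sum>j\<in>{..<N} - {i}. w j * gauss (X i) (X j) (s j)) \<le> (\<Sum>j\<in>{..<N} - {i}. w j * B)"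
    proof (intro sum_mono mult_left_mono)
      fix j assume j: "j \<in> {..<N} - {i}"
      have r: "m \<le> norm (X i - X j)" using md i j by auto
      have ne: "X i \<noteq> X j" using r m by auto
      have "gauss (X i) (X j) (s j) \<le> (real DIM('a) / (2*pi*(norm (X i - X j))\<^sup>2)) powr (real DIM('a) / 2)"
        using ne s j by (intro gauss_dist_bound) auto
      also have "\<dots> \<le> B" unfolding B_def
      proof (intro powr_mono2 divide_left_mono mult_left_mono)
        show "m\<^sup>2 \<le> (norm (X i - X j))\<^sup>2" using r m by (intro power_mono) auto
      qed (use m ne in auto)
      finally show "gauss (X i) (X j) (s j) \<le> B" .
      show "0 \<le> w j" using w j by (simp add: less_imp_le)
    qed
    also have "\<dots> = (\<Sum>j\<in>{..<N} - {i}. w j) * B" by (simp add: sum_distrib_right)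
    also have "\<dots> \<le> (\<Sum>j<N. w j) * B"
      using w by (intro mult_right_mono sum_mono2) (auto simp: B_def less_imp_le)
    also have "\<dots> = B" using w by simp
    finally show ?thesis using pos by simp
  qed
  then have "loglik_loo N X w s \<le> real (card {..<N}) * ln B"
    unfolding loglik_loo_def by (intro sum_bounded_above) auto
  then show ?thesis by (simp add: B_def)
qed



lemma partE:
  fixes X :: "nat \<Rightarrow> 'a::euclidean_space"
  assumes N: "N \<ge> 2" and m: "m > 0" and md: "\<forall>i<N. \<forall>j<N. i \<noteq> j \<longrightarrow> m \<le> norm (X i - X j)"
    and adm: "admissible N w s"
    and mx: "\<forall>w' s'. admissible N w' s' \<longrightarrow> loglik_loo N X w' s' \<le> loglik_loo N X w s"
  shows "\<forall>j<N. s j \<ge> m / sqrt (real DIM('a))"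
proof (rule ccontr)
  define D where "D = real DIM('a)"
  define e where "e = m / sqrt D"
  have D: "D > 0" unfolding D_def by simp
  have e: "e > 0" unfolding e_def using m D by simp
  have De: "D * e\<^sup>2 = m\<^sup>2" unfolding e_def using D by (simp add: power_divide)
  assume "\<not> (\<forall>j<N. s j \<ge> m / sqrt (real DIM('a)))"
  then obtain j where j: "j < N" "s j < e" unfolding e_def D_def by auto
  have w: "\<forall>j<N. w j > 0" "(\<Sum>j<N. w j) = 1" and s: "\<forall>j<N. s j > 0"
    using adm unfolding admissible_def by auto
  define s' where "s' = s(j := e)"
  have adm': "admissible N w s'" using adm e unfolding admissible_def s'_def by auto
  define S where "S = (\<lambda>ss i. \<Sum>k\<in>{..<N} - {i}. w k * gauss (X i) (X k) (ss k))"
  have le: "ln (S s i) \<le> ln (S s' i)" and lt: "i \<noteq> j \<Longrightarrow> ln (S s i) < ln (S s' i)" if i: "i < N" for i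
  proof -
    define j0 where "j0 = (if i = 0 then 1 else (0::nat))"
    have j0: "j0 < N" "j0 \<noteq> i" unfolding j0_def using N by auto
    have pos: "0 < S s i" unfolding S_def
      using i w s j0 by (intro sum_pos) (auto intro!: mult_pos_pos gauss_pos)
    have lek: "w k * gauss (X i) (X k) (s k) \<le> w k * gauss (X i) (X k) (s' k)" if k: "k \<in> {..<N} - {i}" for k
    proof (cases "k = j")
      case True
      have r: "m \<le> norm (X i - X k)" using md i k by auto
      have "D * e\<^sup>2 \<le> (norm (X i - X k))\<^sup>2" unfolding De using r m by (intro power_mono) auto
      then have "gauss (X i) (X k) (s k) < gauss (X i) (X k) e"
        using j s True unfolding D_def by (intro gauss_strict) auto
      then show ?thesis using True w j by (simp add: s'_def less_imp_le)
    qed (simp add: s'_def)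
    have Sle: "S s i \<le> S s' i" unfolding S_def using lek by (intro sum_mono) auto
    then show "ln (S s i) \<le> ln (S s' i)" using pos by simp
    assume ij: "i \<noteq> j"
    have "S s i < S s' i" unfolding S_def
    proof (rule sum_strict_mono_ex1)
      show "\<forall>x\<in>{..<N} - {i}. w x * gauss (X i) (X x) (s x) \<le> w x * gauss (X i) (X x) (s' x)"
        using lek by blast
      have r: "m \<le> norm (X i - X j)" using md i j ij by auto
      have "D * e\<^sup>2 \<le> (norm (X i - X j))\<^sup>2" unfolding De using r m by (intro power_mono) auto
      then have "gauss (X i) (X j) (s j) < gauss (X i) (X j) e"
        using j s unfolding D_def by (intro gauss_strict) auto
      then have "w j * gauss (X i) (X j) (s j) < w j * gauss (X i) (X j) (s' j)"
        using w j by (simp add: s'_def)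
      then show "\<exists>x\<in>{..<N} - {i}. w x * gauss (X i) (X x) (s x) < w x * gauss (X i) (X x) (s' x)"
        using j ij by blast
    qed simp
    then show "ln (S s i) < ln (S s' i)" using pos by simp
  qed
  define i0 where "i0 = (if j = 0 then 1 else (0::nat))"
  have i0: "i0 < N" "i0 \<noteq> j" unfolding i0_def using N by auto
  have eq: "loglik_loo N X w ss = (\<Sum>i<N. ln (S ss i))" for ss
    by (simp add: loglik_loo_def S_def)
  have "loglik_loo N X w s < loglik_loo N X w s'"
    unfolding eq
  proof (rule sum_strict_mono_ex1)
    show "\<forall>x\<in>{..<N}. ln (S s x) \<le> ln (S s' x)" using le by blast
    show "\<exists>x\<in>{..<N}. ln (S s x) < ln (S s' x)" using lt i0 by blast
  qed simp
  moreover have "loglik_loo N X w s' \<le> loglik_loo N X w s" using mx adm' by blast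
  ultimately show False by simp
qed

theorem mainTheorem4:
  fixes N :: nat and X :: "nat \<Rightarrow> 'a::euclidean_space"
  shows
  \<comment> \<open>(i) divergence as one bandwidth shrinks\<close>
  "(\<forall>j'<N. \<forall>w s. (\<forall>j<N. w j > 0) \<and> (\<Sum>j<N. w j) = 1 \<and> (\<forall>j<N. j \<noteq> j' \<longrightarrow> s j > 0) \<longrightarrow>
       filterlim (\<lambda>t. loglik N X w (s(j' := t))) at_top (at_right 0))
   \<and> (\<forall>\<epsilon>>0. \<exists>C. \<forall>(Y :: nat \<Rightarrow> 'a) w s. admissible N w s \<and> (\<forall>j<N. s j \<ge> \<epsilon>) \<longrightarrow>
       loglik N Y w s \<le> C)
   \<and> (\<forall>(w :: nat \<Rightarrow> nat \<Rightarrow> real) s. (\<forall>n. admissible N (w n) (s n)) \<and>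
       filterlim (\<lambda>n. loglik N X (w n) (s n)) at_top sequentially \<longrightarrow>
       (\<lambda>n. Min (s n ` {..<N})) \<longlonglongrightarrow> 0)
   \<and> (N \<ge> 2 \<and> inj_on X {..<N} \<longrightarrow>
       (\<exists>C. \<forall>w s. admissible N w s \<longrightarrow> loglik_loo N X w s \<le> C)
     \<and> (\<exists>\<epsilon>>0. \<forall>w s. admissible N w s \<and>
          (\<forall>w' s'. admissible N w' s' \<longrightarrow> loglik_loo N X w' s' \<le> loglik_loo N X w s) \<longrightarrow>
          (\<forall>j<N. s j \<ge> \<epsilon>)))"
proof (intro conjI allI impI)
  fix j' and w s :: "nat \<Rightarrow> real" assume "j' < N" "(\<forall>j<N. w j > 0) \<and> (\<Sum>j<N. w j) = 1 \<and> (\<forall>j<N. j \<noteq> j' \<longrightarrow> s j > 0)"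
  then show "filterlim (\<lambda>t. loglik N X w (s(j' := t))) at_top (at_right 0)"
    using partA by blast
next
  fix e :: real assume e: "0 < e"
  show "\<exists>C. \<forall>(Y :: nat \<Rightarrow> 'a) w s. admissible N w s \<and> (\<forall>j<N. s j \<ge> e) \<longrightarrow> loglik N Y w s \<le> C"
    using partB[OF e] by blast
next
  fix w :: "nat \<Rightarrow> nat \<Rightarrow> real" and s
  assume "(\<forall>n. admissible N (w n) (s n)) \<and> filterlim (\<lambda>n. loglik N X (w n) (s n)) at_top sequentially"
  then show "(\<lambda>n. Min (s n ` {..<N})) \<longlonglongrightarrow> 0" using partC by blast
next
  assume a: "N \<ge> 2 \<and> inj_on X {..<N}"
  then obtain m where m: "m > 0" "\<forall>i<N. \<forall>j<N. i \<noteq> j \<longrightarrow> m \<le> norm (X i - X j)"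
    using min_dist by blast
  show "\<exists>C. \<forall>w s. admissible N w s \<longrightarrow> loglik_loo N X w s \<le> C"
    using partD[OF _ m(1) m(2)] a by blast
  show "\<exists>\<epsilon>>0. \<forall>w s. admissible N w s \<and>
          (\<forall>w' s'. admissible N w' s' \<longrightarrow> loglik_loo N X w' s' \<le> loglik_loo N X w s) \<longrightarrow>
          (\<forall>j<N. s j \<ge> \<epsilon>)"
  proof (intro exI conjI allI impI)
    show "0 < m / sqrt (real DIM('a))" using m by simp
    fix w s j assume "admissible N w s \<and>
          (\<forall>w' s'. admissible N w' s' \<longrightarrow> loglik_loo N X w' s' \<le> loglik_loo N X w s)" "j < N"
    then show "m / sqrt (real DIM('a)) \<le> s j" using partE[OF _ m(1) m(2)] a by blast
  qed
qed

end
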